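(* Let $m,n,w,d$ be positive integers with $w\le m$. For any positive integer $a$, $$A(am,n,w,d)\ge C\left(a,n,\left\lceil\frac{d}{w}\right\rceil\right)A(m,n,w,d).$$ Furthermore, if $a$ divides $w$ and $d\le nw\frac{a-1}{a}$, then $$A(am,n,w,d)\ge C\left(a,n,\left\lceil\frac{d}{w}\right\rceil\right)A(m,n,w,d)+A\left(m,an,\frac{w}{a},d\right).$$
   Context: $J(m,w)$ denotes the set of binary vectors of length $m$ and Hamming weight $w$. Elements of $J(m,w)^n$ are identified with $m\times n$ binary matrices all of whose columns have weight $w$, with binary Hamming distance. $A(m,n,w,d)$ is the maximum cardinality of a nonempty subset of $J(m,w)^n$ with pairwise Hamming distances at least $2d$. $C(q,n,d)$ is the maximum cardinality of a nonempty subset of $[q]^n$, $[q]=\{0,\dots,q-1\}$, with pairwise Hamming distances (number of differing coordinates) at least $d$. *)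

theory Defs
  imports Complex_Main
begin

text \<open>Elements of J(m,w)^n, identified with m x n binary matrices all of whose
columns have weight w. A matrix is a function x :: nat => nat => bool where x i j is
the entry in row i < m and column j < n; entries outside the range are False
(so the set is finite and each matrix has a unique representative).\<close>
definition Jmat :: "nat \<Rightarrow> nat \<Rightarrow> nat \<Rightarrow> (nat \<Rightarrow> nat \<Rightarrow> bool) set" where
  "Jmat m n w = {x. (\<forall>i j. x i j \<longrightarrow> i < m \<and> j < n) \<and>
                    (\<forall>j<n. card {i. i < m \<and> x i j} = w)}"

definition bdist :: "nat \<Rightarrow> nat \<Rightarrow> (nat \<Rightarrow> nat \<Rightarrow> bool) \<Rightarrow> (nat \<Rightarrow> nat \<Rightarrow> bool) \<Rightarrow> nat" where
  "bdist m n x y = card {(i, j). i < m \<and> j < n \<and> x i j \<noteq> y i j}"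

definition A_code :: "nat \<Rightarrow> nat \<Rightarrow> nat \<Rightarrow> nat \<Rightarrow> nat" where
  "A_code m n w d = Max {card S | S. S \<subseteq> Jmat m n w \<and> S \<noteq> {} \<and>
      (\<forall>x\<in>S. \<forall>y\<in>S. x \<noteq> y \<longrightarrow> 2 * d \<le> bdist m n x y)}"

definition qwords :: "nat \<Rightarrow> nat \<Rightarrow> (nat \<Rightarrow> nat) set" where
  "qwords q n = {x. (\<forall>j<n. x j < q) \<and> (\<forall>j\<ge>n. x j = 0)}"

definition hdist :: "nat \<Rightarrow> (nat \<Rightarrow> nat) \<Rightarrow> (nat \<Rightarrow> nat) \<Rightarrow> nat" where
  "hdist n x y = card {j. j < n \<and> x j \<noteq> y j}"

definition C_code :: "nat \<Rightarrow> nat \<Rightarrow> nat \<Rightarrow> nat" where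
  "C_code q n d = Max {card S | S. S \<subseteq> qwords q n \<and> S \<noteq> {} \<and>
      (\<forall>x\<in>S. \<forall>y\<in>S. x \<noteq> y \<longrightarrow> d \<le> hdist n x y)}"

end

theory Submission
  imports Defs
begin


lemma card_pairs:
  fixes M N :: nat
  shows   "card {(i,j). i<M \<and> j<N \<and> P i j} = (\<Sum>j<N. card {i. i<M \<and> P i j})"
proof -
  have e: "{(i,j). i<M \<and> j<N \<and> P i j} = (\<lambda>(j,i). (i,j)) ` (SIGMA j:{..<N}. {i. i<M \<and> P i j})"
    by auto
  have inj: "inj_on (\<lambda>(j,i). (i,j)) (SIGMA j:{..<N}. {i. i<M \<and> P i j})"
    by (auto simp: inj_on_def)
  show ?thesis unfolding e card_image[OF inj]
    by (rule card_SigmaI) auto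
qed

lemma bdist_col: "bdist M N x y = (\<Sum>j<N. card {i. i<M \<and> x i j \<noteq> y i j})"
  unfolding bdist_def by (rule card_pairs)

lemma bdist_self: "bdist M N x x = 0"
  unfolding bdist_def by simp

lemma bdist_sym: "bdist M N x y = bdist M N y x"
  unfolding bdist_def by (metis (no_types, lifting))

lemma finite_Jmat: "finite (Jmat m n w)"
proof -
  have "(\<lambda>x. {(i,j). x i j}) ` Jmat m n w \<subseteq> Pow ({..<m} \<times> {..<n})"
    by (auto simp: Jmat_def)
  hence f: "finite ((\<lambda>x. {(i,j). x i j}) ` Jmat m n w)"
    by (rule finite_subset) auto
  have "inj_on (\<lambda>x. {(i,j). x i j}) (Jmat m n w)"
    by (auto simp: inj_on_def fun_eq_iff)
  thus ?thesis using f finite_imageD by blast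
qed

lemma finite_qwords: "finite (qwords q n)"
proof -
  have "(\<lambda>x. map x [0..<n]) ` qwords q n \<subseteq> {xs. set xs \<subseteq> {..<q} \<and> length xs = n}"
    by (auto simp: qwords_def)
  hence f: "finite ((\<lambda>x. map x [0..<n]) ` qwords q n)"
    by (rule finite_subset) (rule finite_lists_length_eq, simp)
  have "inj_on (\<lambda>x. map x [0..<n]) (qwords q n)"
  proof (rule inj_onI)
    fix x y assume x: "x \<in> qwords q n" and y: "y \<in> qwords q n" and e: "map x [0..<n] = map y [0..<n]"
    show "x = y"
    proof
      fix j show "x j = y j"
      proof (cases "j < n")
        case True then show ?thesis using e by (metis add_0 diff_zero nth_map_upt)
      next
        case False then show ?thesis using x y by (simp add: qwords_def)
      qed
    qed
  qed
  thus ?thesis using f finite_imageD by blast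
qed

lemma Jmat_ne: assumes "w \<le> m" shows "(\<lambda>i j. i < w \<and> j < n) \<in> Jmat m n w"
proof -
  have "{i. i < m \<and> i < w} = {..<w}" using assms by auto
  thus ?thesis using assms by (auto simp: Jmat_def)
qed

lemma A_code_ge:
  assumes "S \<subseteq> Jmat m n w" "S \<noteq> {}" "\<forall>x\<in>S. \<forall>y\<in>S. x \<noteq> y \<longrightarrow> 2 * d \<le> bdist m n x y"
  shows "card S \<le> A_code m n w d"
  unfolding A_code_def
proof (rule Max_ge)
  show "finite {card S |S. S \<subseteq> Jmat m n w \<and> S \<noteq> {} \<and> (\<forall>x\<in>S. \<forall>y\<in>S. x \<noteq> y \<longrightarrow> 2 * d \<le> bdist m n x y)}"
    by (rule finite_subset[of _ "{..card (Jmat m n w)}"]) (auto intro: card_mono finite_Jmat)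
  show "card S \<in> {card S |S. S \<subseteq> Jmat m n w \<and> S \<noteq> {} \<and> (\<forall>x\<in>S. \<forall>y\<in>S. x \<noteq> y \<longrightarrow> 2 * d \<le> bdist m n x y)}"
    using assms by blast
qed

lemma A_code_ex:
  assumes "w \<le> m"
  shows "\<exists>S. S \<subseteq> Jmat m n w \<and> S \<noteq> {} \<and> (\<forall>x\<in>S. \<forall>y\<in>S. x \<noteq> y \<longrightarrow> 2 * d \<le> bdist m n x y)
     \<and> card S = A_code m n w d"
proof -
  let ?K = "{card S |S. S \<subseteq> Jmat m n w \<and> S \<noteq> {} \<and> (\<forall>x\<in>S. \<forall>y\<in>S. x \<noteq> y \<longrightarrow> 2 * d \<le> bdist m n x y)}"
  have f: "finite ?K"
    by (rule finite_subset[of _ "{..card (Jmat m n w)}"]) (auto intro: card_mono finite_Jmat)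
  have "card {(\<lambda>i j. i < w \<and> j < n)} \<in> ?K"
    by (rule CollectI, rule exI[of _ "{(\<lambda>i j. i < w \<and> j < n)}"]) (use Jmat_ne[OF assms, of n] in simp)
  hence ne: "?K \<noteq> {}" by (metis empty_iff)
  have "Max ?K \<in> ?K" by (rule Max_in[OF f ne])
  hence "\<exists>S. Max ?K = card S \<and> S \<subseteq> Jmat m n w \<and> S \<noteq> {} \<and> (\<forall>x\<in>S. \<forall>y\<in>S. x \<noteq> y \<longrightarrow> 2 * d \<le> bdist m n x y)" by (simp only: mem_Collect_eq)
  then obtain S where S: "Max ?K = card S \<and> S \<subseteq> Jmat m n w \<and> S \<noteq> {} \<and> (\<forall>x\<in>S. \<forall>y\<in>S. x \<noteq> y \<longrightarrow> 2 * d \<le> bdist m n x y)" ..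
  show ?thesis unfolding A_code_def by (rule exI[of _ S]) (use S in simp)
qed

lemma C_code_ex:
  assumes "0 < q"
  shows "\<exists>S. S \<subseteq> qwords q n \<and> S \<noteq> {} \<and> (\<forall>x\<in>S. \<forall>y\<in>S. x \<noteq> y \<longrightarrow> d \<le> hdist n x y)
     \<and> card S = C_code q n d"
proof -
  let ?K = "{card S |S. S \<subseteq> qwords q n \<and> S \<noteq> {} \<and> (\<forall>x\<in>S. \<forall>y\<in>S. x \<noteq> y \<longrightarrow> d \<le> hdist n x y)}"
  have f: "finite ?K"
    by (rule finite_subset[of _ "{..card (qwords q n)}"]) (auto intro: card_mono finite_qwords)
  have x0: "(\<lambda>j. 0::nat) \<in> qwords q n" using assms by (simp add: qwords_def)
  have "card {(\<lambda>j. 0::nat)} \<in> ?K"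
    by (rule CollectI, rule exI[of _ "{(\<lambda>j. 0::nat)}"]) (use x0 in simp)
  hence ne: "?K \<noteq> {}" by (metis empty_iff)
  have "Max ?K \<in> ?K" by (rule Max_in[OF f ne])
  hence "\<exists>S. Max ?K = card S \<and> S \<subseteq> qwords q n \<and> S \<noteq> {} \<and> (\<forall>x\<in>S. \<forall>y\<in>S. x \<noteq> y \<longrightarrow> d \<le> hdist n x y)" by (simp only: mem_Collect_eq)
  then obtain S where S: "Max ?K = card S \<and> S \<subseteq> qwords q n \<and> S \<noteq> {} \<and> (\<forall>x\<in>S. \<forall>y\<in>S. x \<noteq> y \<longrightarrow> d \<le> hdist n x y)" ..
  show ?thesis unfolding C_code_def by (rule exI[of _ S]) (use S in simp)
qed

lemma ceil_bound: assumes "0 < w" shows "d \<le> w * nat \<lceil>real d / real w\<rceil>"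
proof -
  define k where "k = nat \<lceil>real d / real w\<rceil>"
  have h0: "0 \<le> real d / real w" by simp
  have "real d / real w \<le> of_int \<lceil>real d / real w\<rceil>" by (rule le_of_int_ceiling)
  moreover have "0 \<le> \<lceil>real d / real w\<rceil>" using h0 by (simp; linarith)
  ultimately have "real d / real w \<le> real k" unfolding k_def by simp
  hence "real d \<le> real w * real k" using assms by (simp add: field_simps)
  hence "d \<le> w * k" by (metis of_nat_le_iff of_nat_mult)
  thus ?thesis unfolding k_def .
qed



definition conc :: "nat \<Rightarrow> (nat\<Rightarrow>nat) \<Rightarrow> (nat\<Rightarrow>nat\<Rightarrow>bool) \<Rightarrow> nat\<Rightarrow>nat\<Rightarrow>bool" where
  "conc m c x = (\<lambda>i j. i div m = c j \<and> x (i mod m) j)"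

definition spr :: "nat \<Rightarrow> nat \<Rightarrow> nat \<Rightarrow> (nat\<Rightarrow>nat\<Rightarrow>bool) \<Rightarrow> nat\<Rightarrow>nat\<Rightarrow>bool" where
  "spr a m n y = (\<lambda>i j. j < n \<and> i div m < a \<and> y (i mod m) ((i div m)*n + j))"

lemma blk: assumes "0 < (m::nat)" "i < m" shows "(b*m + i) div m = b" "(b*m + i) mod m = i"
  using assms by auto

lemma blk_lt: assumes "b < a" "i < (m::nat)" shows "b*m + i < a*m"
proof -
  have "b*m + i < b*m + m" using assms by simp
  also have "\<dots> = (b+1)*m" by simp
  also have "\<dots> \<le> a*m" using assms by (intro mult_right_mono) auto
  finally show ?thesis .
qed

lemma conc_col:
  assumes m: "0 < m" and c: "c \<in> qwords a n" and j: "j < n"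
  shows "{i. i < a*m \<and> conc m c x i j} = (\<lambda>i. c j * m + i) ` {i. i < m \<and> x i j}"
proof -
  have cj: "c j < a" using c j by (simp add: qwords_def)
  show ?thesis
  proof (intro equalityI subsetI)
    fix i assume "i \<in> {i. i < a*m \<and> conc m c x i j}"
    hence "i div m = c j" "x (i mod m) j" by (auto simp: conc_def)
    moreover have "i = c j * m + i mod m" using \<open>i div m = c j\<close> by (metis div_mult_mod_eq add.commute)
    ultimately show "i \<in> (\<lambda>i. c j * m + i) ` {i. i < m \<and> x i j}" using m
      by (metis (mono_tags, lifting) image_eqI mem_Collect_eq mod_less_divisor)
  next
    fix i assume "i \<in> (\<lambda>i. c j * m + i) ` {i. i < m \<and> x i j}"
    then obtain k where "k < m" "x k j" "i = c j * m + k" by auto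
    thus "i \<in> {i. i < a*m \<and> conc m c x i j}" using m cj blk_lt[OF cj]
      by (auto simp: conc_def)
  qed
qed

lemma conc_col_card:
  assumes m: "0 < m" and c: "c \<in> qwords a n" and j: "j < n" and x: "x \<in> Jmat m n w"
  shows "card {i. i < a*m \<and> conc m c x i j} = w"
  unfolding conc_col[OF assms(1-3)]
  by (subst card_image) (use x j in \<open>auto simp: Jmat_def\<close>)

lemma conc_in:
  assumes m: "0 < m" and c: "c \<in> qwords a n" and x: "x \<in> Jmat m n w"
  shows "conc m c x \<in> Jmat (a*m) n w"
proof -
  have "conc m c x i j \<Longrightarrow> i < a*m \<and> j < n" for i j
  proof -
    assume h: "conc m c x i j"
    hence jn: "j < n" using x by (auto simp: conc_def Jmat_def)
    hence "i div m < a" using h c by (auto simp: conc_def qwords_def)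
    thus ?thesis using jn by (metis div_less_iff_less_mult m mult.commute)
  qed
  thus ?thesis using conc_col_card[OF m c _ x] by (auto simp: Jmat_def)
qed

lemma conc_same:
  assumes m: "0 < m" and c: "c \<in> qwords a n"
  shows "bdist (a*m) n (conc m c x) (conc m c x') = bdist m n x x'"
  unfolding bdist_col
proof (rule sum.cong[OF refl])
  fix j assume "j \<in> {..<n}"
  hence j: "j < n" by simp
  have cj: "c j < a" using c j by (simp add: qwords_def)
  have "{i. i < a*m \<and> conc m c x i j \<noteq> conc m c x' i j} = (\<lambda>i. c j * m + i) ` {i. i < m \<and> x i j \<noteq> x' i j}"
  proof (intro equalityI subsetI)
    fix i assume "i \<in> {i. i < a*m \<and> conc m c x i j \<noteq> conc m c x' i j}"
    hence "i div m = c j" "x (i mod m) j \<noteq> x' (i mod m) j" by (auto simp: conc_def)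
    moreover have "i = c j * m + i mod m" using \<open>i div m = c j\<close> by (metis div_mult_mod_eq add.commute)
    ultimately show "i \<in> (\<lambda>i. c j * m + i) ` {i. i < m \<and> x i j \<noteq> x' i j}" using m
      by (intro image_eqI[of _ _ "i mod m"]) auto
  next
    fix i assume "i \<in> (\<lambda>i. c j * m + i) ` {i. i < m \<and> x i j \<noteq> x' i j}"
    then obtain k where "k < m" "x k j \<noteq> x' k j" "i = c j * m + k" by auto
    thus "i \<in> {i. i < a*m \<and> conc m c x i j \<noteq> conc m c x' i j}" using m cj blk_lt[OF cj]
      by (auto simp: conc_def)
  qed
  thus "card {i. i < a*m \<and> conc m c x i j \<noteq> conc m c x' i j} = card {i. i < m \<and> x i j \<noteq> x' i j}"
    by (simp add: card_image inj_on_def)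
qed

lemma conc_diff:
  assumes m: "0 < m" and c: "c \<in> qwords a n" and c': "c' \<in> qwords a n"
    and x: "x \<in> Jmat m n w" and x': "x' \<in> Jmat m n w"
  shows "2 * w * hdist n c c' \<le> bdist (a*m) n (conc m c x) (conc m c' x')"
proof -
  let ?J = "{j. j < n \<and> c j \<noteq> c' j}"
  let ?f = "\<lambda>j. card {i. i < a*m \<and> conc m c x i j \<noteq> conc m c' x' i j}"
  have col: "?f j = 2 * w" if j: "j \<in> ?J" for j
  proof -
    have jn: "j < n" and ne: "c j \<noteq> c' j" using j by auto
    let ?A = "{i. i < a*m \<and> conc m c x i j}" and ?B = "{i. i < a*m \<and> conc m c' x' i j}"
    have "{i. i < a*m \<and> conc m c x i j \<noteq> conc m c' x' i j} = ?A \<union> ?B"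
      using ne by (auto simp: conc_def)
    moreover have "?A \<inter> ?B = {}" using ne by (auto simp: conc_def)
    ultimately have "?f j = card ?A + card ?B" by (simp add: card_Un_disjoint)
    thus ?thesis using conc_col_card[OF m c jn x] conc_col_card[OF m c' jn x'] by simp
  qed
  have "2 * w * hdist n c c' = (\<Sum>j\<in>?J. ?f j)"
    using col by (simp add: hdist_def)
  also have "\<dots> \<le> (\<Sum>j<n. ?f j)" by (rule sum_mono2) auto
  finally show ?thesis unfolding bdist_col .
qed



lemma spr_blk:
  assumes m: "0 < m" and n: "0 < n" and b: "b < a" and j: "j < n"
  shows "{i. i < a*m \<and> spr a m n y i j \<and> i div m = b} = (\<lambda>i. b * m + i) ` {i. i < m \<and> y i (b*n+j)}"
proof (intro equalityI subsetI)
  fix i assume "i \<in> {i. i < a*m \<and> spr a m n y i j \<and> i div m = b}"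
  hence "i div m = b" "y (i mod m) (b*n+j)" by (auto simp: spr_def)
  moreover have "i = b * m + i mod m" using \<open>i div m = b\<close> by (metis div_mult_mod_eq add.commute)
  ultimately show "i \<in> (\<lambda>i. b * m + i) ` {i. i < m \<and> y i (b*n+j)}" using m
    by (intro image_eqI[of _ _ "i mod m"]) auto
next
  fix i assume "i \<in> (\<lambda>i. b * m + i) ` {i. i < m \<and> y i (b*n+j)}"
  then obtain k where "k < m" "y k (b*n+j)" "i = b * m + k" by auto
  thus "i \<in> {i. i < a*m \<and> spr a m n y i j \<and> i div m = b}" using m b j blk_lt[OF b]
    by (auto simp: spr_def)
qed

lemma spr_blk_card:
  assumes m: "0 < m" and n: "0 < n" and b: "b < a" and j: "j < n" and y: "y \<in> Jmat m (a*n) t"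
  shows "card {i. i < a*m \<and> spr a m n y i j \<and> i div m = b} = t"
proof -
  have "b*n + j < a*n" using blk_lt[OF b j] by (simp add: mult.commute)
  hence "card {i. i < m \<and> y i (b*n+j)} = t" using y by (simp add: Jmat_def)
  thus ?thesis unfolding spr_blk[OF assms(1-4)]
    by (subst card_image) (auto simp: inj_on_def)
qed

lemma spr_col_card:
  assumes m: "0 < m" and n: "0 < n" and j: "j < n" and y: "y \<in> Jmat m (a*n) t"
  shows "card {i. i < a*m \<and> spr a m n y i j} = a * t"
proof -
  have e: "{i. i < a*m \<and> spr a m n y i j} = (\<Union>b\<in>{..<a}. {i. i < a*m \<and> spr a m n y i j \<and> i div m = b})"
    by (auto simp: spr_def)
  have "card {i. i < a*m \<and> spr a m n y i j} = (\<Sum>b\<in>{..<a}. card {i. i < a*m \<and> spr a m n y i j \<and> i div m = b})"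
    unfolding e by (rule card_UN_disjoint) auto
  also have "\<dots> = (\<Sum>b\<in>{..<a}. t)" using spr_blk_card[OF m n _ j y] by simp
  finally show ?thesis by simp
qed

lemma spr_in:
  assumes m: "0 < m" and n: "0 < n" and y: "y \<in> Jmat m (a*n) t"
  shows "spr a m n y \<in> Jmat (a*m) n (a*t)"
proof -
  have "spr a m n y i j \<Longrightarrow> i < a*m \<and> j < n" for i j
  proof -
    assume "spr a m n y i j"
    hence "j < n" "i div m < a" by (auto simp: spr_def)
    moreover have "i div m < a \<longleftrightarrow> i < a * m" using div_less_iff_less_mult[OF m, of i a] by (simp add: mult.commute)
    ultimately show ?thesis by simp
  qed
  thus ?thesis using spr_col_card[OF m n _ y] by (auto simp: Jmat_def)
qed

lemma spr_dist:
  assumes m: "0 < m" and n: "0 < n"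
  shows "bdist m (a*n) y y' \<le> bdist (a*m) n (spr a m n y) (spr a m n y')"
  unfolding bdist_def
proof (rule card_inj_on_le)
  let ?f = "\<lambda>(i,j). ((j div n)*m + i, j mod n)"
  show "inj_on ?f {(i, j). i < m \<and> j < a * n \<and> y i j \<noteq> y' i j}"
  proof (rule inj_onI, clarsimp)
    fix i j i' j'
    assume h: "i < m" "i' < m" "(j div n)*m + i = (j' div n)*m + i'" "j mod n = j' mod n"
    have e1: "j div n = j' div n" using arg_cong[OF h(3), of "\<lambda>k. k div m"] h(1,2) m by simp
    have e2: "i = i'" using arg_cong[OF h(3), of "\<lambda>k. k mod m"] h(1,2) m by simp
    have "j = j div n * n + j mod n" "j' = j' div n * n + j' mod n" by (rule div_mult_mod_eq[symmetric])+
    hence "j = j'" using e1 h(4) by argo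
    thus "i = i' \<and> j = j'" using e2 by simp
  qed
  show "?f ` {(i, j). i < m \<and> j < a * n \<and> y i j \<noteq> y' i j}
      \<subseteq> {(i, j). i < a * m \<and> j < n \<and> spr a m n y i j \<noteq> spr a m n y' i j}"
  proof
    fix p assume "p \<in> ?f ` {(i, j). i < m \<and> j < a * n \<and> y i j \<noteq> y' i j}"
    then obtain i j where h: "i < m" "j < a*n" "y i j \<noteq> y' i j" and p: "p = ((j div n)*m + i, j mod n)" by auto
    have b: "j div n < a" using h n by (simp add: div_less_iff_less_mult)
    have d: "((j div n)*m + i) div m = j div n" "((j div n)*m + i) mod m = i" using h(1,2) m by auto
    have jj: "(j div n)*n + j mod n = j" by (metis div_mult_mod_eq)
    have "(j div n)*m + i < a*m \<and> j mod n < n \<and>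
       spr a m n y ((j div n)*m + i) (j mod n) \<noteq> spr a m n y' ((j div n)*m + i) (j mod n)"
    proof -
      have s1: "spr a m n y ((j div n)*m + i) (j mod n) = y i j" unfolding spr_def d jj using b n by simp
      have s2: "spr a m n y' ((j div n)*m + i) (j mod n) = y' i j" unfolding spr_def d jj using b n by simp
      show ?thesis unfolding s1 s2 using blk_lt[OF b h(1)] n h(3) by simp
    qed
    thus "p \<in> {(i, j). i < a * m \<and> j < n \<and> spr a m n y i j \<noteq> spr a m n y' i j}"
      unfolding p by simp
  qed
  show "finite {(i, j). i < a * m \<and> j < n \<and> spr a m n y i j \<noteq> spr a m n y' i j}"
    by (rule finite_subset[of _ "{..<a*m} \<times> {..<n}"]) auto
qed

lemma cross_dist:
  assumes m: "0 < m" and n: "0 < n" and c: "c \<in> qwords a n" and x: "x \<in> Jmat m n (a*t)"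
    and y: "y \<in> Jmat m (a*n) t"
  shows "n * (2*(a*t) - 2*t) \<le> bdist (a*m) n (conc m c x) (spr a m n y)"
proof -
  have col: "2*(a*t) - 2*t \<le> card {i. i < a*m \<and> conc m c x i j \<noteq> spr a m n y i j}" if j: "j < n" for j
  proof -
    let ?A = "{i. i < a*m \<and> conc m c x i j}" and ?B = "{i. i < a*m \<and> spr a m n y i j}"
    have cj: "c j < a" using c j by (simp add: qwords_def)
    have cA: "card ?A = a*t" by (rule conc_col_card[OF m c j x])
    have cB: "card ?B = a*t" by (rule spr_col_card[OF m n j y])
    have "?A \<inter> ?B \<subseteq> {i. i < a*m \<and> spr a m n y i j \<and> i div m = c j}" by (auto simp: conc_def)
    hence "card (?A \<inter> ?B) \<le> card {i. i < a*m \<and> spr a m n y i j \<and> i div m = c j}"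
      by (intro card_mono) auto
    hence cI: "card (?A \<inter> ?B) \<le> t" using spr_blk_card[OF m n cj j y] by simp
    have e: "{i. i < a*m \<and> conc m c x i j \<noteq> spr a m n y i j} = (?A - ?B) \<union> (?B - ?A)" by blast
    have "card ((?A - ?B) \<union> (?B - ?A)) = card (?A - ?B) + card (?B - ?A)"
      by (rule card_Un_disjoint) auto
    also have "\<dots> = (card ?A - card (?A \<inter> ?B)) + (card ?B - card (?B \<inter> ?A))"
      by (simp add: card_Diff_subset_Int)
    also have "?B \<inter> ?A = ?A \<inter> ?B" by blast
    finally have "card ((?A - ?B) \<union> (?B - ?A)) = (a*t - card (?A \<inter> ?B)) + (a*t - card (?A \<inter> ?B))"
      using cA cB by simp
    thus ?thesis unfolding e using cI by linarith
  qed
  have "n * (2*(a*t) - 2*t) = (\<Sum>j<n. 2*(a*t) - 2*t)" by simp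
  also have "\<dots> \<le> (\<Sum>j<n. card {i. i < a*m \<and> conc m c x i j \<noteq> spr a m n y i j})"
    by (rule sum_mono) (use col in auto)
  finally show ?thesis unfolding bdist_col .
qed



theorem proposition8:
  fixes m n w d a :: nat
  assumes "0 < m" "0 < n" "0 < w" "0 < d" "w \<le> m" "0 < a"
  shows "A_code (a * m) n w d \<ge>
           C_code a n (nat \<lceil>real d / real w\<rceil>) * A_code m n w d \<and>
         (a dvd w \<and> real d \<le> real n * real w * (real a - 1) / real a \<longrightarrow>
         A_code (a * m) n w d \<ge>
           C_code a n (nat \<lceil>real d / real w\<rceil>) * A_code m n w d
           + A_code m (a * n) (w div a) d)"
proof -
  note m = assms(1) and n = assms(2) and w = assms(3) and d = assms(4) and wm = assms(5) and a = assms(6)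
  define k where "k = nat \<lceil>real d / real w\<rceil>"
  obtain D where D: "D \<subseteq> Jmat m n w" "D \<noteq> {}" "\<forall>x\<in>D. \<forall>y\<in>D. x \<noteq> y \<longrightarrow> 2 * d \<le> bdist m n x y"
    "card D = A_code m n w d" using A_code_ex[OF wm, of n d] by blast
  obtain E where E: "E \<subseteq> qwords a n" "E \<noteq> {}" "\<forall>x\<in>E. \<forall>y\<in>E. x \<noteq> y \<longrightarrow> k \<le> hdist n x y"
    "card E = C_code a n k" using C_code_ex[OF a, of n k] by blast
  have dk: "d \<le> w * k" unfolding k_def by (rule ceil_bound[OF w])
  have distT: "2 * d \<le> bdist (a*m) n (conc m c x) (conc m c' x')"
    if h: "c \<in> E" "x \<in> D" "c' \<in> E" "x' \<in> D" "(c, x) \<noteq> (c', x')" for c x c' x'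
  proof (cases "c = c'")
    case True
    hence "x \<noteq> x'" using h by simp
    hence "2 * d \<le> bdist m n x x'" using D(3) h by blast
    thus ?thesis using conc_same[OF m, of c a n x x'] True h E(1) by auto
  next
    case False
    hence "k \<le> hdist n c c'" using E(3) h by blast
    hence "2 * d \<le> 2 * w * hdist n c c'" using dk
      by (metis mult_le_mono2 mult.assoc order_trans nat_mult_le_cancel_disj)
    also have "\<dots> \<le> bdist (a*m) n (conc m c x) (conc m c' x')"
      by (rule conc_diff[OF m]) (use h E(1) D(1) in auto)
    finally show ?thesis .
  qed
  define T where "T = (\<lambda>(c, x). conc m c x) ` (E \<times> D)"
  have injT: "inj_on (\<lambda>(c, x). conc m c x) (E \<times> D)"
  proof (rule inj_onI, clarify)
    fix c x c' x' assume h: "c \<in> E" "x \<in> D" "c' \<in> E" "x' \<in> D" "conc m c x = conc m c' x'"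
    show "c = c' \<and> x = x'"
    proof (rule ccontr)
      assume "\<not> (c = c' \<and> x = x')"
      hence "(c, x) \<noteq> (c', x')" by simp
      from distT[OF h(1-4) this] have "2 * d \<le> bdist (a*m) n (conc m c x) (conc m c' x')" .
      thus False unfolding h(5) bdist_self using d by simp
    qed
  qed
  have cardT: "card T = C_code a n k * A_code m n w d"
    unfolding T_def card_image[OF injT] card_cartesian_product E(4) D(4) ..
  have TJ: "T \<subseteq> Jmat (a*m) n w" unfolding T_def
  proof clarify
    fix c x assume "c \<in> E" "x \<in> D"
    thus "conc m c x \<in> Jmat (a*m) n w" by (intro conc_in[OF m]) (use E(1) D(1) in auto)
  qed
  have Tne: "T \<noteq> {}" unfolding T_def using E(2) D(2) by auto
  have Tdist: "\<forall>z\<in>T. \<forall>z'\<in>T. z \<noteq> z' \<longrightarrow> 2 * d \<le> bdist (a*m) n z z'"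
    unfolding T_def using distT by auto
  have part1: "C_code a n k * A_code m n w d \<le> A_code (a * m) n w d"
    using A_code_ge[OF TJ Tne Tdist] cardT by simp
  have part2: "C_code a n k * A_code m n w d + A_code m (a * n) (w div a) d \<le> A_code (a * m) n w d"
    if h: "a dvd w" "real d \<le> real n * real w * (real a - 1) / real a"
  proof -
    obtain t where wt: "w = a * t" using h(1) by blast
    have wa: "w div a = t" using wt a by simp
    have rw: "real w = real a * real t" using wt by simp
    have ra: "real a \<noteq> 0" using a by simp
    have r1: "real a - 1 = real (a - 1)" using a by (simp add: of_nat_diff)
    have "real n * real w * (real a - 1) = real a * (real n * real t * (real a - 1))"
      unfolding rw by (simp add: algebra_simps)
    hence "real n * real w * (real a - 1) / real a = real a * (real n * real t * (real a - 1)) / real a"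
      by (rule arg_cong[where f="\<lambda>u. u / real a"])
    also have "\<dots> = real n * real t * (real a - 1)" by (rule nonzero_mult_div_cancel_left[OF ra])
    also have "\<dots> = real (n * t * (a - 1))" unfolding r1 by simp
    finally have "real d \<le> real (n * t * (a - 1))" using h(2) by simp
    hence dnt: "d \<le> n * t * (a - 1)" by (simp only: of_nat_le_iff)
    have "t \<le> a * t" using a by simp
    moreover have "a * t \<le> m" using wt wm by simp
    ultimately have tm: "t \<le> m" by (rule order_trans)
    obtain Y where Y: "Y \<subseteq> Jmat m (a*n) t" "Y \<noteq> {}" "\<forall>x\<in>Y. \<forall>y\<in>Y. x \<noteq> y \<longrightarrow> 2 * d \<le> bdist m (a*n) x y"
      "card Y = A_code m (a*n) t d" using A_code_ex[OF tm, of "a*n" d] by blast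
    define U where "U = spr a m n ` Y"
    have injU: "inj_on (spr a m n) Y"
    proof (rule inj_onI, rule ccontr)
      fix y y' assume hy: "y \<in> Y" "y' \<in> Y" "spr a m n y = spr a m n y'" "y \<noteq> y'"
      hence "2 * d \<le> bdist m (a*n) y y'" using Y(3) by blast
      also have "\<dots> \<le> bdist (a*m) n (spr a m n y) (spr a m n y')" by (rule spr_dist[OF m n])
      finally show False using hy(3) d by (simp add: bdist_self)
    qed
    have cardU: "card U = A_code m (a * n) (w div a) d" unfolding U_def card_image[OF injU] Y(4) wa ..
    have UJ: "U \<subseteq> Jmat (a*m) n w" unfolding U_def wt using spr_in[OF m n] Y(1) by auto
    have Udist: "\<forall>z\<in>U. \<forall>z'\<in>U. z \<noteq> z' \<longrightarrow> 2 * d \<le> bdist (a*m) n z z'"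
    proof (intro ballI impI)
      fix z z' assume "z \<in> U" "z' \<in> U" "z \<noteq> z'"
      then obtain y y' where hy: "y \<in> Y" "y' \<in> Y" "z = spr a m n y" "z' = spr a m n y'" "y \<noteq> y'"
        unfolding U_def by auto
      hence "2 * d \<le> bdist m (a*n) y y'" using Y(3) by blast
      also have "\<dots> \<le> bdist (a*m) n z z'" unfolding hy by (rule spr_dist[OF m n])
      finally show "2 * d \<le> bdist (a*m) n z z'" .
    qed
    have e2: "n * (2*(a*t) - 2*t) = 2 * (n * t * (a - 1))"
      by (simp add: algebra_simps diff_mult_distrib2)
    have cross: "2 * d \<le> bdist (a*m) n z u" if hz: "z \<in> T" "u \<in> U" for z u
    proof -
      obtain c x y where hc: "c \<in> E" "x \<in> D" "y \<in> Y" "z = conc m c x" "u = spr a m n y"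
        using hz unfolding T_def U_def by auto
      have "2 * d \<le> n * (2*(a*t) - 2*t)" unfolding e2 using dnt by simp
      also have "\<dots> \<le> bdist (a*m) n z u" unfolding hc
        by (rule cross_dist[OF m n]) (use hc E(1) D(1) Y(1) wt in auto)
      finally show ?thesis .
    qed
    have disj: "T \<inter> U = {}"
    proof (rule ccontr)
      assume "T \<inter> U \<noteq> {}"
      then obtain z where "z \<in> T" "z \<in> U" by blast
      hence "2 * d \<le> bdist (a*m) n z z" by (rule cross)
      thus False using d by (simp add: bdist_self)
    qed
    have fin: "finite T" "finite U" using TJ UJ finite_Jmat finite_subset by blast+
    have cardTU: "card (T \<union> U) = card T + card U" by (rule card_Un_disjoint[OF fin disj])
    have TUdist: "\<forall>z\<in>T \<union> U. \<forall>z'\<in>T \<union> U. z \<noteq> z' \<longrightarrow> 2 * d \<le> bdist (a*m) n z z'"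
      using Tdist Udist cross bdist_sym by (metis Un_iff)
    have "card (T \<union> U) \<le> A_code (a * m) n w d"
      by (rule A_code_ge) (use TJ UJ Tne TUdist in auto)
    thus ?thesis using cardTU cardT cardU by simp
  qed
  show ?thesis using part1 part2 unfolding k_def by blast
qed

end
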